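(* Let $a>0$, $\mu\ge 0$, $\lambda>0$, and let $f$ and $g$ be functions of $(x,t)$ such that there are positive constants $C_1,C_2$ with $$\sup\{|f(x,t)|: x\in[0,a],\ t\ge0\}\le C_1,\qquad \inf\{g(x,t): x\in[0,a),\ t\ge 0\}\ge C_2$$ ($g$ may be singular at $x=a$). Consider the equation $$\ddot{x}+\mu\dot{x}+f(x,t)=\lambda g(x,t)$$ with initial condition $x(0)=0$, $\dot{x}(0)=0$, whose physically meaningful solution takes values in $[0,a]$, $x=a$ being the touch-down position. If $\lambda>0$ is sufficiently large, then there is a finite time $t_c>0$, depending on $\lambda$ and $a$, such that the solution climbs monotonically to the touch-down position at $t=t_c$, that is, $$x(t_c)=\lim_{t\to t_c}x(t)=a\quad\text{and}\quad \dot{x}(t)>0\ \text{ for all } t\in(0,t_c).$$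
   Context: This is a normalized equation of motion for an electrostatic actuator with damping constant $\mu\ge0$, a restoring-type force $f$, and a Coulomb-like driving force $\lambda g$ with coupling parameter $\lambda$ resembling the applied voltage; the solution is considered only while $0\le x(t)<a$. *)

theory Defs
  imports "HOL-Analysis.Analysis"
begin

end

theory Submission imports Defs begin

lemma mono_within:
  fixes h h' :: "real \<Rightarrow> real"
  assumes T: "A \<le> T" and A: "0 \<le> A"
    and d: "\<And>t. t\<in>{A..T} \<Longrightarrow> (h has_real_derivative h' t) (at t within {0..})"
    and nn: "\<And>t. t\<in>{A..T} \<Longrightarrow> h' t \<ge> 0"
  shows "h A \<le> h T"
proof (rule DERIV_nonneg_imp_increasing_open[OF T])
  fix t assume t: "A < t" "t < T"
  have "at t within {0..} = at t"
    by (rule at_within_interior) (use t A in auto)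
  then have "(h has_real_derivative h' t) (at t)" using d[of t] t by simp
  then show "\<exists>y. (h has_real_derivative y) (at t) \<and> 0 \<le> y" using nn[of t] t by auto
next
  show "continuous_on {A..T} h"
    unfolding continuous_on_eq_continuous_within
  proof
    fix t assume t: "t \<in> {A..T}"
    have "continuous (at t within {0..}) h"
      using d[OF t] by (rule DERIV_continuous)
    then show "continuous (at t within {A..T}) h"
      by (rule continuous_within_subset) (use A in auto)
  qed
qed

lemma Fderiv:
  fixes \<mu> t :: real
  shows "((\<lambda>t. if \<mu> = 0 then t else (exp (\<mu>*t) - 1)/\<mu>) has_real_derivative exp (\<mu>*t)) (at t within S)"
proof (cases "\<mu> = 0")
  case True then show ?thesis by simp
next
  case False
  have "((\<lambda>t. (exp (\<mu>*t) - 1)/\<mu>) has_real_derivative exp (\<mu>*t)) (at t within S)"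
    using False by (auto intro!: derivative_eq_intros)
  then show ?thesis using False by simp
qed

lemma Fbounds:
  fixes \<mu> :: real
  assumes "\<mu> \<ge> 0"
  defines "G \<equiv> \<lambda>t. (if \<mu> = 0 then t else (exp (\<mu>*t) - 1)/\<mu>) / exp (\<mu>*t)"
  shows "\<And>t. t > 0 \<Longrightarrow> G t > 0" and "\<And>t. t \<ge> 1 \<Longrightarrow> G t \<ge> G 1"
proof -
  fix t :: real assume t: "t > 0"
  show "G t > 0"
  proof (cases "\<mu> = 0")
    case True then show ?thesis using t by (simp add: G_def)
  next
    case False
    then have "\<mu> > 0" using assms by simp
    then have "exp (\<mu>*t) > 1" using t by simp
    then show ?thesis using \<open>\<mu> > 0\<close> by (simp add: G_def)
  qed
next
  fix t :: real assume t: "t \<ge> 1"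
  show "G t \<ge> G 1"
  proof (cases "\<mu> = 0")
    case True then show ?thesis using t by (simp add: G_def)
  next
    case False
    then have m: "\<mu> > 0" using assms by simp
    have e: "\<And>u. (exp (\<mu> * u) - 1) / \<mu> / exp (\<mu> * u) = (1 - exp (- (\<mu> * u))) / \<mu>"
      by (simp add: field_simps exp_minus)
    have "exp (-(\<mu>*t)) \<le> exp (-(\<mu>*1))" using m t by simp
    then have "(1 - exp (-(\<mu>*1)))/\<mu> \<le> (1 - exp (-(\<mu>*t)))/\<mu>"
      using m by (intro divide_right_mono) auto
    then show ?thesis using False e[of t] e[of 1] unfolding G_def by simp
  qed
qed

theorem theorem3:
  fixes a \<mu> C1 C2 :: real and f g :: "real \<Rightarrow> real \<Rightarrow> real"
  assumes a_pos: "a > 0" and mu_nonneg: "\<mu> \<ge> 0"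
    and C1_pos: "C1 > 0" and C2_pos: "C2 > 0"
    and f_bound: "\<forall>y\<in>{0..a}. \<forall>t\<ge>0. \<bar>f y t\<bar> \<le> C1"
    and g_bound: "\<forall>y\<in>{0..<a}. \<forall>t\<ge>0. g y t \<ge> C2"
  shows "\<exists>\<Lambda>. \<forall>lam>\<Lambda>. lam > 0 \<longrightarrow>
    (\<forall>x xd xdd :: real \<Rightarrow> real.
       continuous_on {0..} x
       \<and> (\<forall>t\<ge>0. 0 \<le> x t \<and> x t \<le> a)
       \<and> x 0 = 0 \<and> xd 0 = 0
       \<and> (\<forall>t\<ge>0. (\<forall>s\<in>{0..t}. x s < a) \<longrightarrow>
             (x has_real_derivative xd t) (at t within {0..})
           \<and> (xd has_real_derivative xdd t) (at t within {0..})
           \<and> xdd t + \<mu> * xd t + f (x t) t = lam * g (x t) t)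
     \<longrightarrow> (\<exists>tc>0. x tc = a \<and> (x \<longlongrightarrow> a) (at_left tc)
           \<and> (\<forall>t\<in>{0..<tc}. x t < a)
           \<and> (\<forall>t\<in>{0<..<tc}. xd t > 0)))"
proof (rule exI[of _ "C1/C2"], intro allI impI)
  fix lam :: real and x xd xdd :: "real \<Rightarrow> real"
  assume lam: "C1/C2 < lam" and lpos: "0 < lam"
  assume H: "continuous_on {0..} x
       \<and> (\<forall>t\<ge>0. 0 \<le> x t \<and> x t \<le> a)
       \<and> x 0 = 0 \<and> xd 0 = 0
       \<and> (\<forall>t\<ge>0. (\<forall>s\<in>{0..t}. x s < a) \<longrightarrow>
             (x has_real_derivative xd t) (at t within {0..})
           \<and> (xd has_real_derivative xdd t) (at t within {0..})
           \<and> xdd t + \<mu> * xd t + f (x t) t = lam * g (x t) t)"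
  then have cont: "continuous_on {0..} x" and xb: "\<And>t. t \<ge> 0 \<Longrightarrow> 0 \<le> x t \<and> x t \<le> a"
    and x0: "x 0 = 0" and xd0: "xd 0 = 0"
    and ode: "\<And>t. t \<ge> 0 \<Longrightarrow> (\<forall>s\<in>{0..t}. x s < a) \<Longrightarrow>
             (x has_real_derivative xd t) (at t within {0..})
           \<and> (xd has_real_derivative xdd t) (at t within {0..})
           \<and> xdd t + \<mu> * xd t + f (x t) t = lam * g (x t) t"
    by auto
  define k where "k = lam * C2 - C1"
  have kpos: "k > 0" using lam C2_pos by (simp add: k_def field_simps)
  define F where "F = (\<lambda>t. if \<mu> = 0 then t else (exp (\<mu>*t) - 1)/\<mu>)"
  define G where "G = (\<lambda>t. (if \<mu> = 0 then t else (exp (\<mu>*t) - 1)/\<mu>) / exp (\<mu>*t))"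
  have Gpos: "\<And>t. t > 0 \<Longrightarrow> G t > 0" and Gmono: "\<And>t. t \<ge> 1 \<Longrightarrow> G t \<ge> G 1"
    using Fbounds[OF mu_nonneg] unfolding G_def by auto
  have acc: "\<And>t. t \<ge> 0 \<Longrightarrow> (\<forall>s\<in>{0..t}. x s < a) \<Longrightarrow> xdd t + \<mu> * xd t \<ge> k"
  proof -
    fix t :: real assume t: "t \<ge> 0" and b: "\<forall>s\<in>{0..t}. x s < a"
    have xt: "0 \<le> x t" "x t < a" using xb[OF t] b t by auto
    have "\<bar>f (x t) t\<bar> \<le> C1" using f_bound xt t by auto
    moreover have "g (x t) t \<ge> C2" using g_bound xt t by auto
    then have "lam * g (x t) t \<ge> lam * C2" using lpos by simp
    ultimately show "xdd t + \<mu> * xd t \<ge> k" using ode[OF t b] unfolding k_def by linarith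
  qed
  have key: "\<And>T. T \<ge> 0 \<Longrightarrow> (\<forall>s\<in>{0..T}. x s < a) \<Longrightarrow> xd T \<ge> k * G T"
  proof -
    fix T :: real assume T: "T \<ge> 0" and b: "\<forall>s\<in>{0..T}. x s < a"
    define h where "h = (\<lambda>t. exp (\<mu>*t) * xd t - k * F t)"
    define h' where "h' = (\<lambda>t. exp (\<mu>*t) * \<mu> * xd t + exp (\<mu>*t) * xdd t - k * exp (\<mu>*t))"
    have "h 0 \<le> h T"
    proof (rule mono_within[OF T order_refl])
      fix t assume t: "t \<in> {0..T}"
      then have bt: "\<forall>s\<in>{0..t}. x s < a" using b by auto
      have t0: "t \<ge> 0" using t by auto
      have d1: "((\<lambda>t. exp (\<mu>*t)) has_real_derivative exp (\<mu>*t) * \<mu>) (at t within {0..})"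
        by (auto intro!: derivative_eq_intros)
      have d2: "(xd has_real_derivative xdd t) (at t within {0..})" using ode[OF t0 bt] by auto
      have d3: "(F has_real_derivative exp (\<mu>*t)) (at t within {0..})"
        unfolding F_def by (rule Fderiv)
      show "(h has_real_derivative h' t) (at t within {0..})"
        unfolding h_def h'_def
        using DERIV_diff[OF DERIV_mult[OF d1 d2] DERIV_cmult[OF d3, of k]] by (simp add: mult.commute)
      have "xdd t + \<mu> * xd t - k \<ge> 0" using acc[OF t0 bt] by simp
      then have "exp (\<mu>*t) * (xdd t + \<mu> * xd t - k) \<ge> 0" by simp
      then show "h' t \<ge> 0" unfolding h'_def by (simp add: algebra_simps)
    qed
    moreover have "F 0 = 0" unfolding F_def by simp
    ultimately have "exp (\<mu>*T) * xd T \<ge> k * F T" unfolding h_def using xd0 by simp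
    then have "xd T \<ge> k * F T / exp (\<mu>*T)" by (simp add: field_simps)
    then show "xd T \<ge> k * G T" unfolding G_def F_def by simp
  qed
  have ex: "\<exists>t\<ge>0. x t = a"
  proof (rule ccontr)
    assume "\<not> ?thesis"
    then have all: "\<And>t. t \<ge> 0 \<Longrightarrow> x t < a" using xb by force
    define c where "c = k * G 1"
    have cpos: "c > 0" using kpos Gpos[of 1] by (simp add: c_def)
    define T where "T = a / c + 2"
    have T1: "1 \<le> T" using a_pos cpos by (simp add: T_def)
    have "x 1 - c * 1 \<le> x T - c * T"
    proof (rule mono_within[where h' = "\<lambda>t. xd t - c", OF T1])
      fix t assume t: "t \<in> {1..T}"
      then have t0: "t \<ge> 0" by auto
      have bt: "\<forall>s\<in>{0..t}. x s < a" using all by auto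
      show "((\<lambda>t. x t - c * t) has_real_derivative xd t - c) (at t within {0..})"
        using ode[OF t0 bt] by (auto intro!: derivative_eq_intros)
      have "xd t \<ge> k * G t" using key[OF t0 bt] .
      moreover have "k * G t \<ge> c" unfolding c_def using Gmono[of t] t kpos by simp
      ultimately show "xd t - c \<ge> 0" by simp
    qed simp
    moreover have "x 1 \<ge> 0" using xb[of 1] by simp
    moreover have "c * T = a + 2 * c" using cpos by (simp add: T_def field_simps)
    ultimately have "x T \<ge> a + c" by linarith
    then show False using xb[of T] T1 cpos by simp
  qed
  define S where "S = {t \<in> {0..}. x t = a}"
  have Sne: "S \<noteq> {}" using ex by (auto simp: S_def)
  have Sbdd: "bdd_below S" unfolding S_def by (rule bdd_belowI[of _ 0]) auto
  have Scl: "closed S" unfolding S_def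
    by (rule continuous_closed_preimage_constant[OF cont]) simp
  define tc where "tc = Inf S"
  have tcS: "tc \<in> S" unfolding tc_def by (rule closed_contains_Inf[OF Sne Sbdd Scl])
  then have tc0: "tc \<ge> 0" and xtc: "x tc = a" by (auto simp: S_def)
  have tcpos: "tc > 0" using tc0 xtc x0 a_pos by (cases "tc = 0") auto
  have below: "\<forall>t\<in>{0..<tc}. x t < a"
  proof
    fix t assume t: "t \<in> {0..<tc}"
    have "x t \<noteq> a"
    proof
      assume "x t = a"
      then have "t \<in> S" using t by (auto simp: S_def)
      then have "tc \<le> t" unfolding tc_def using Sbdd by (rule cInf_lower)
      then show False using t by simp
    qed
    then show "x t < a" using xb[of t] t by auto
  qed
  have "isCont x tc"
    by (rule continuous_on_interior[OF cont]) (use tcpos in auto)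
  then have "(x \<longlongrightarrow> a) (at tc)" using xtc by (simp add: isCont_def)
  then have lim: "(x \<longlongrightarrow> a) (at_left tc)"
    by (rule tendsto_mono[rotated]) (simp add: at_le)
  have pos: "\<forall>t\<in>{0<..<tc}. xd t > 0"
  proof
    fix t assume t: "t \<in> {0<..<tc}"
    have "\<forall>s\<in>{0..t}. x s < a" using below t by auto
    then have "xd t \<ge> k * G t" using key t by auto
    moreover have "k * G t > 0" using kpos Gpos[of t] t by simp
    ultimately show "xd t > 0" by simp
  qed
  show "\<exists>tc>0. x tc = a \<and> (x \<longlongrightarrow> a) (at_left tc)
           \<and> (\<forall>t\<in>{0..<tc}. x t < a)
           \<and> (\<forall>t\<in>{0<..<tc}. xd t > 0)"
    using tcpos xtc lim below pos by blast
qed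

end
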